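(* Assume $\operatorname{rank}(X)=n$ and $\xi_r(\varpi^N)<1/2$ for some $r\in\{0,\ldots,N\}$. Let $A^\circ\in\mathbb{R}^{n\times s}$ and $\hat A\in\arg\min_{A}\mathcal{J}(A)$, and suppose $A^\circ$ and $\hat A$ are comparable over $\varpi^N$ with associated permutation $\pi$ (i.e. $|I_i(A^\circ)\cap I_{\pi(i)}(\hat A)|\ge\nu_n(X)$ for all $i\in\mathbb{S}$). Then for any norm $\|\cdot\|$ on $\mathbb{R}^{n\times s}$ there exists $D>0$ such that $$\|\hat A_\pi-A^\circ\|\le\frac{2}{D\big(1-2\xi_r(\varpi^N)\big)}\,\delta_r(A^\circ),$$ where $\hat A_\pi=[\hat a_{\pi(1)}\ \cdots\ \hat a_{\pi(s)}]$.
   Context: Data: integers $n,s,N\ge1$ and a dataset $\varpi^N=((x_1,y_1),\ldots,(x_N,y_N))$ with $x_t\in\mathbb{R}^n$, $y_t\in\mathbb{R}$ (in the paper generated by $y_t=x_t^\top a^\circ_{\sigma(t)}+v_t$ with true parameter matrix $A^\circ=[a_1^\circ\ \cdots\ a_s^\circ]$); $X=[x_1\ \cdots\ x_N]\in\mathbb{R}^{n\times N}$. Let $\mathbb{T}=\{1,\ldots,N\}$, $\mathbb{S}=\{1,\ldots,s\}$. For $A=[a_1\ \cdots\ a_s]\in\mathbb{R}^{n\times s}$, $\sigma_A:\mathbb{T}\to\mathbb{S}$ is a switching signal satisfying $\sigma_A(t)\in\arg\min_{i\in\mathbb{S}}|y_t-x_t^\top a_i|$ for all $t$, selected uniquely by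 a fixed rule depending only on $A$ and the data (among all admissible choices, one maximizing $\min_{i}|I_i(A)|$, ties then broken by assigning the smallest admissible index). $I_i(A)=\{t\in\mathbb{T}:\sigma_A(t)=i\}$. $\phi(A)=\big(y_1-x_1^\top a_{\sigma_A(1)},\ldots,y_N-x_N^\top a_{\sigma_A(N)}\big)^\top$, $\mathcal{J}(A)=\|\phi(A)\|_1$, $\phi_{\mathcal{T}}(A)$ its subvector indexed by $\mathcal{T}\subset\mathbb{T}$. $\mathcal{S}_r=\{w\in\mathbb{R}^N:\|w\|_0\le r\}$, $\delta_r(A)=\inf_{w\in\mathcal{S}_r}\|\phi(A)-w\|_1$. The $r$-th concentration ratio is $$\xi_r(\varpi^N)=\sup\Big\{\frac{\|\phi_{\mathcal{T}}(A)-\phi_{\mathcal{T}}(A')\|_1}{\|\phi(A)-\phi(A')\|_1}: A,A'\in\mathbb{R}^{n\times s},\ \mathcal{T}\subset\mathbb{T},\ \phi(A)\ne\phi(A'),\ |\mathcal{T}|\le r\Big\}.$$ Genericity index: for $\operatorname{rank}(X)=n$, $\nu_n(X)$ is the smallest integer $m$ such that every submatrix formed by $m$ columns of $X$ has rank $n$. Comparability: $A,A'$ are comparable over $\varpi^N$ if there is a permutation $\pi$ of $\mathbb{S}$ with $|I_i(A)\cap I_{\pi(i)}(A')|\ge\nu_n(X)$ for all $i$. *)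

theory Defs
  imports "HOL-Analysis.Analysis"
begin

text \<open>Data: N samples, regressors x t :: real^'n, outputs y t, for t in {1..N}.
  The mode set S is the finite linearly ordered type 's (s = CARD('s)).
  A parameter matrix A in R^(n x s) is represented as A :: (real^'n)^'s, its
  i-th column a_i being A $ i.  Vectors in R^N are functions nat => real
  restricted to the index set {1..N}.\<close>

definition admissible :: "nat \<Rightarrow> (nat \<Rightarrow> real^'n) \<Rightarrow> (nat \<Rightarrow> real)
    \<Rightarrow> (real^'n)^'s::{finite,linorder} \<Rightarrow> (nat \<Rightarrow> 's) set" where
  "admissible N x y A = Pi\<^sub>E {1..N}
     (\<lambda>t. {i. \<forall>j. \<bar>y t - x t \<bullet> A $ i\<bar> \<le> \<bar>y t - x t \<bullet> A $ j\<bar>})"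

definition balance :: "nat \<Rightarrow> (nat \<Rightarrow> 's::{finite,linorder}) \<Rightarrow> nat" where
  "balance N \<sigma> = Min (range (\<lambda>i. card {t \<in> {1..N}. \<sigma> t = i}))"

definition lexless :: "nat \<Rightarrow> (nat \<Rightarrow> 's::linorder) \<Rightarrow> (nat \<Rightarrow> 's) \<Rightarrow> bool" where
  "lexless N \<sigma> \<tau> \<longleftrightarrow> (\<exists>k\<in>{1..N}. (\<forall>j\<in>{1..<k}. \<sigma> j = \<tau> j) \<and> \<sigma> k < \<tau> k)"

definition switching :: "nat \<Rightarrow> (nat \<Rightarrow> real^'n) \<Rightarrow> (nat \<Rightarrow> real)
    \<Rightarrow> (real^'n)^'s::{finite,linorder} \<Rightarrow> (nat \<Rightarrow> 's)" where
  "switching N x y A =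
    (let C = admissible N x y A;
         M = {\<sigma> \<in> C. \<forall>\<tau> \<in> C. balance N \<tau> \<le> balance N \<sigma>}
     in THE \<sigma>. \<sigma> \<in> M \<and> (\<forall>\<tau> \<in> M. \<tau> \<noteq> \<sigma> \<longrightarrow> lexless N \<sigma> \<tau>))"

definition Iset :: "nat \<Rightarrow> (nat \<Rightarrow> real^'n) \<Rightarrow> (nat \<Rightarrow> real)
    \<Rightarrow> (real^'n)^'s::{finite,linorder} \<Rightarrow> 's \<Rightarrow> nat set" where
  "Iset N x y A i = {t \<in> {1..N}. switching N x y A t = i}"

definition phi :: "nat \<Rightarrow> (nat \<Rightarrow> real^'n) \<Rightarrow> (nat \<Rightarrow> real)
    \<Rightarrow> (real^'n)^'s::{finite,linorder} \<Rightarrow> nat \<Rightarrow> real" where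
  "phi N x y A t = y t - x t \<bullet> (A $ switching N x y A t)"

definition Jcost :: "nat \<Rightarrow> (nat \<Rightarrow> real^'n) \<Rightarrow> (nat \<Rightarrow> real)
    \<Rightarrow> (real^'n)^'s::{finite,linorder} \<Rightarrow> real" where
  "Jcost N x y A = (\<Sum>t\<in>{1..N}. \<bar>phi N x y A t\<bar>)"

definition delta :: "nat \<Rightarrow> (nat \<Rightarrow> real^'n) \<Rightarrow> (nat \<Rightarrow> real) \<Rightarrow> nat
    \<Rightarrow> (real^'n)^'s::{finite,linorder} \<Rightarrow> real" where
  "delta N x y r A = Inf {(\<Sum>t\<in>{1..N}. \<bar>phi N x y A t - w t\<bar>) | w.
       card {t \<in> {1..N}. w t \<noteq> 0} \<le> r}"

definition xi :: "nat \<Rightarrow> (nat \<Rightarrow> real^'n) \<Rightarrow> (nat \<Rightarrow> real) \<Rightarrow> nat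
    \<Rightarrow> ('s::{finite,linorder}) itself \<Rightarrow> real" where
  "xi N x y r _ = Sup {(\<Sum>t\<in>T. \<bar>phi N x y A t - phi N x y A' t\<bar>)
                     / (\<Sum>t\<in>{1..N}. \<bar>phi N x y A t - phi N x y A' t\<bar>)
      | (A :: (real^'n)^'s::{finite,linorder}) (A' :: (real^'n)^'s::{finite,linorder}) T. T \<subseteq> {1..N} \<and> card T \<le> r \<and>
          (\<exists>t\<in>{1..N}. phi N x y A t \<noteq> phi N x y A' t)}"

definition nu :: "nat \<Rightarrow> (nat \<Rightarrow> real^'n) \<Rightarrow> nat" where
  "nu N x = (LEAST m. \<forall>T \<subseteq> {1..N}. card T = m \<longrightarrow> dim (x ` T) = CARD('n))"

definition is_norm :: "('a::real_vector \<Rightarrow> real) \<Rightarrow> bool" where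
  "is_norm f \<longleftrightarrow> (\<forall>v. 0 \<le> f v) \<and> (\<forall>v. f v = 0 \<longleftrightarrow> v = 0) \<and>
     (\<forall>c v. f (c *\<^sub>R v) = \<bar>c\<bar> * f v) \<and> (\<forall>v w. f (v + w) \<le> f v + f w)"

end

theory Submission
  imports Defs
begin

lemma nu_prop:
  fixes x :: "nat \<Rightarrow> real^'n"
  shows "\<forall>T \<subseteq> {1..N}. card T = nu N x \<longrightarrow> dim (x ` T) = CARD('n)"
proof -
  have "\<forall>T \<subseteq> {1..N}. card T = Suc N \<longrightarrow> dim (x ` T) = CARD('n)"
  proof (intro allI impI)
    fix T assume "T \<subseteq> {1..N}" "card T = Suc N"
    then have "card T \<le> card {1..N}" by (intro card_mono) auto
    with \<open>card T = Suc N\<close> show "dim (x ` T) = CARD('n)" by simp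
  qed
  then show ?thesis unfolding nu_def by (rule LeastI)
qed

lemma orth_zero:
  fixes x :: "nat \<Rightarrow> real^'n" and d :: "real^'n"
  assumes "dim (x ` S) = CARD('n)" and "\<forall>t\<in>S. x t \<bullet> d = 0"
  shows "d = 0"
proof -
  have "span (x ` S) = UNIV" using assms(1) dim_eq_full[of "x ` S"] by simp
  then have "d \<in> span (x ` S)" by simp
  moreover have "\<And>v. v \<in> x ` S \<Longrightarrow> orthogonal d v"
    using assms(2) by (auto simp: orthogonal_def inner_commute)
  ultimately have "orthogonal d d" by (rule orthogonal_to_span)
  then show ?thesis by (simp add: orthogonal_def)
qed

theorem corollary1:
  fixes N r :: nat and x :: "nat \<Rightarrow> real^'n" and y :: "nat \<Rightarrow> real"
    and A0 Ahat :: "(real^'n)^('s::{finite,linorder})" and \<pi> :: "'s \<Rightarrow> 's"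
  assumes "N \<ge> 1"
    and rank: "dim (x ` {1..N}) = CARD('n)"
    and "r \<le> N"
    and xi_lt: "xi N x y r TYPE('s::{finite,linorder}) < 1/2"
    and argmin: "\<forall>A :: (real^'n)^('s::{finite,linorder}). Jcost N x y Ahat \<le> Jcost N x y A"
    and perm: "\<pi> permutes (UNIV :: 's set)"
    and comp: "\<forall>i. card (Iset N x y A0 i \<inter> Iset N x y Ahat (\<pi> i)) \<ge> nu N x"
  shows "\<forall>nrm :: (real^'n)^('s::{finite,linorder}) \<Rightarrow> real. is_norm nrm \<longrightarrow>
           (\<exists>D > 0. nrm ((\<chi> i. Ahat $ \<pi> i) - A0)
              \<le> 2 / (D * (1 - 2 * xi N x y r TYPE('s::{finite,linorder}))) * delta N x y r A0)"
proof -
  define P0 where "P0 = phi N x y A0"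
  define Ph where "Ph = phi N x y Ahat"
  define \<xi> where "\<xi> = xi N x y r TYPE('s)"
  define E where "E = (\<Sum>t\<in>{1..N}. \<bar>Ph t - P0 t\<bar>)"
  define W where "W = {(\<Sum>t\<in>{1..N}. \<bar>phi N x y A0 t - w t\<bar>) | w.
       card {t \<in> {1..N}. w t \<noteq> 0} \<le> r}"
  have dl: "delta N x y r A0 = Inf W" unfolding W_def delta_def by simp
  have E0: "E \<ge> 0" unfolding E_def by (intro sum_nonneg) auto
  have xi1: "\<xi> < 1/2" using xi_lt \<xi>_def by simp
  have sT: "(\<Sum>t\<in>T. \<bar>Ph t - P0 t\<bar>) \<le> \<xi> * E" if T: "T \<subseteq> {1..N}" "card T \<le> r" for T
  proof (cases "E = 0")
    case True
    have "(\<Sum>t\<in>T. \<bar>Ph t - P0 t\<bar>) \<le> E" unfolding E_def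
      using T by (intro sum_mono2) auto
    moreover have "(\<Sum>t\<in>T. \<bar>Ph t - P0 t\<bar>) \<ge> 0" by (intro sum_nonneg) auto
    ultimately show ?thesis using True by simp
  next
    case False
    then have Epos: "E > 0" using E0 by simp
    have ex: "\<exists>t\<in>{1..N}. Ph t \<noteq> P0 t"
    proof (rule ccontr)
      assume "\<not> ?thesis"
      then have "E = 0" unfolding E_def by simp
      with False show False by simp
    qed
    define X where "X = {(\<Sum>t\<in>T. \<bar>phi N x y A t - phi N x y A' t\<bar>)
                     / (\<Sum>t\<in>{1..N}. \<bar>phi N x y A t - phi N x y A' t\<bar>)
      | (A :: (real^'n)^'s::{finite,linorder}) (A' :: (real^'n)^'s::{finite,linorder}) T. T \<subseteq> {1..N} \<and> card T \<le> r \<and>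
          (\<exists>t\<in>{1..N}. phi N x y A t \<noteq> phi N x y A' t)}"
    have xX: "\<xi> = Sup X" unfolding \<xi>_def X_def xi_def by simp
    have mem: "(\<Sum>t\<in>T. \<bar>Ph t - P0 t\<bar>) / E \<in> X"
      unfolding X_def E_def Ph_def P0_def using T ex[unfolded Ph_def P0_def] by blast
    have bdd: "bdd_above X"
    proof (rule bdd_aboveI)
      fix z assume "z \<in> X"
      then obtain A A' :: "(real^'n)^('s::{finite,linorder})" and T' where z: "z = (\<Sum>t\<in>T'. \<bar>phi N x y A t - phi N x y A' t\<bar>)
                     / (\<Sum>t\<in>{1..N}. \<bar>phi N x y A t - phi N x y A' t\<bar>)" and
        T': "T' \<subseteq> {1..N}" unfolding X_def by blast
      have a: "(\<Sum>t\<in>T'. \<bar>phi N x y A t - phi N x y A' t\<bar>) \<le> (\<Sum>t\<in>{1..N}. \<bar>phi N x y A t - phi N x y A' t\<bar>)"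
        using T' by (intro sum_mono2) auto
      have b: "(\<Sum>t\<in>T'. \<bar>phi N x y A t - phi N x y A' t\<bar>) \<ge> 0" by (intro sum_nonneg) auto
      have c: "(\<Sum>t\<in>{1..N}. \<bar>phi N x y A t - phi N x y A' t\<bar>) \<ge> 0" by (intro sum_nonneg) auto
      show "z \<le> 1" unfolding z using a b c
        by (metis (no_types, lifting) divide_le_eq_1 le_less not_le)
    qed
    have "(\<Sum>t\<in>T. \<bar>Ph t - P0 t\<bar>) / E \<le> \<xi>" unfolding xX using mem bdd by (rule cSup_upper)
    then show ?thesis using Epos by (simp add: divide_le_eq mult.commute)
  qed
  have Jle: "(\<Sum>t\<in>{1..N}. \<bar>Ph t\<bar>) \<le> (\<Sum>t\<in>{1..N}. \<bar>P0 t\<bar>)"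
    using argmin unfolding Jcost_def Ph_def P0_def by blast
  have step2: "E * (1 - 2*\<xi>) \<le> 2 * z" if "z \<in> W" for z
  proof -
    obtain w where z: "z = (\<Sum>t\<in>{1..N}. \<bar>P0 t - w t\<bar>)" and
      w: "card {t \<in> {1..N}. w t \<noteq> 0} \<le> r" using \<open>z \<in> W\<close> unfolding W_def P0_def by blast
    define T where "T = {t \<in> {1..N}. w t \<noteq> 0}"
    define C where "C = {1..N} - T"
    have TN: "T \<subseteq> {1..N}" unfolding T_def by auto
    have fin: "finite T" "finite C" unfolding T_def C_def by auto
    have split: "(\<Sum>t\<in>{1..N}. g t) = (\<Sum>t\<in>T. g t) + (\<Sum>t\<in>C. g t)" for g :: "nat \<Rightarrow> real"
      unfolding C_def using TN by (metis add.commute finite_atLeastAtMost sum.subset_diff)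
    have a1: "(\<Sum>t\<in>T. \<bar>P0 t\<bar> - \<bar>Ph t - P0 t\<bar>) \<le> (\<Sum>t\<in>T. \<bar>Ph t\<bar>)"
      by (intro sum_mono) linarith
    have a2: "(\<Sum>t\<in>C. \<bar>Ph t - P0 t\<bar> - \<bar>P0 t\<bar>) \<le> (\<Sum>t\<in>C. \<bar>Ph t\<bar>)"
      by (intro sum_mono) linarith
    have a3: "(\<Sum>t\<in>C. \<bar>P0 t\<bar>) \<le> z"
    proof -
      have "(\<Sum>t\<in>C. \<bar>P0 t\<bar>) = (\<Sum>t\<in>C. \<bar>P0 t - w t\<bar>)"
        unfolding C_def T_def by (intro sum.cong) auto
      also have "\<dots> \<le> z" unfolding z split[of "\<lambda>t. \<bar>P0 t - w t\<bar>"]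
        using sum_nonneg[of T "\<lambda>t. \<bar>P0 t - w t\<bar>"] by simp
      finally show ?thesis .
    qed
    have a4: "(\<Sum>t\<in>T. \<bar>Ph t - P0 t\<bar>) \<le> \<xi> * E" using sT[OF TN] w T_def by simp
    have eE: "E = (\<Sum>t\<in>T. \<bar>Ph t - P0 t\<bar>) + (\<Sum>t\<in>C. \<bar>Ph t - P0 t\<bar>)"
      unfolding E_def by (rule split)
    have J1: "(\<Sum>t\<in>T. \<bar>Ph t\<bar>) + (\<Sum>t\<in>C. \<bar>Ph t\<bar>) \<le> (\<Sum>t\<in>T. \<bar>P0 t\<bar>) + (\<Sum>t\<in>C. \<bar>P0 t\<bar>)"
      using Jle split[of "\<lambda>t. \<bar>Ph t\<bar>"] split[of "\<lambda>t. \<bar>P0 t\<bar>"] by simp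
    have b1: "(\<Sum>t\<in>T. \<bar>P0 t\<bar>) - (\<Sum>t\<in>T. \<bar>Ph t - P0 t\<bar>) \<le> (\<Sum>t\<in>T. \<bar>Ph t\<bar>)"
      using a1 by (simp only: sum_subtractf)
    have b2: "(\<Sum>t\<in>C. \<bar>Ph t - P0 t\<bar>) - (\<Sum>t\<in>C. \<bar>P0 t\<bar>) \<le> (\<Sum>t\<in>C. \<bar>Ph t\<bar>)"
      using a2 by (simp only: sum_subtractf)
    have "E - 2 * (\<Sum>t\<in>T. \<bar>Ph t - P0 t\<bar>) \<le> 2 * z" using b1 b2 a3 eE J1 by linarith
    moreover have "2 * (\<Sum>t\<in>T. \<bar>Ph t - P0 t\<bar>) \<le> 2 * (\<xi> * E)" using a4 by linarith
    ultimately show ?thesis by (simp add: algebra_simps)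
  qed
  have Wne: "W \<noteq> {}"
  proof -
    have "(\<Sum>t\<in>{1..N}. \<bar>phi N x y A0 t - (\<lambda>_. 0::real) t\<bar>) \<in> W"
      unfolding W_def by (rule CollectI, rule exI[of _ "\<lambda>_. 0"]) simp
    then show ?thesis by blast
  qed
  have Ed: "E * (1 - 2*\<xi>) \<le> 2 * delta N x y r A0"
  proof -
    have "E * (1 - 2*\<xi>) / 2 \<le> Inf W" using Wne
      by (rule cInf_greatest) (use step2 in fastforce)
    then show ?thesis using dl by simp
  qed
  have d0: "delta N x y r A0 \<ge> 0"
  proof -
    have "0 \<le> Inf W" using Wne
      by (rule cInf_greatest) (auto simp: W_def intro!: sum_nonneg)
    then show ?thesis using dl by simp
  qed
  define v where "v = (\<chi> i. Ahat $ \<pi> i) - A0"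
  have v0: "v = 0" if "E = 0"
  proof -
    have eq: "\<forall>t\<in>{1..N}. Ph t = P0 t"
    proof
      fix t assume t: "t \<in> {1..N}"
      have "\<bar>Ph t - P0 t\<bar> = 0" using that t unfolding E_def
        by (subst (asm) sum_nonneg_eq_0_iff) auto
      then show "Ph t = P0 t" by simp
    qed
    have "v $ i = 0" for i
    proof -
      let ?S = "Iset N x y A0 i \<inter> Iset N x y Ahat (\<pi> i)"
      have fS: "finite ?S" unfolding Iset_def by auto
      obtain S' where S': "S' \<subseteq> ?S" "card S' = nu N x"
        using obtain_subset_with_card_n[OF comp[rule_format, of i]] by blast
      have S'N: "S' \<subseteq> {1..N}" using S' unfolding Iset_def by auto
      have dS: "dim (x ` S') = CARD('n)" using nu_prop[of N x] S'N S' by blast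
      show ?thesis
      proof (rule orth_zero[OF dS], intro ballI)
        fix t assume "t \<in> S'"
        then have t: "t \<in> {1..N}" "switching N x y A0 t = i" "switching N x y Ahat t = \<pi> i"
          using S' unfolding Iset_def by auto
        have "Ph t = P0 t" using eq t by simp
        then show "x t \<bullet> v $ i = 0" using t
          unfolding v_def Ph_def P0_def phi_def by (simp add: inner_diff_right)
      qed
    qed
    then show ?thesis by (simp add: vec_eq_iff)
  qed
  show ?thesis
  proof (intro allI impI)
    fix nrm :: "(real^'n)^('s::{finite,linorder}) \<Rightarrow> real" assume nrm: "is_norm nrm"
    have pos: "1 - 2 * \<xi> > 0" using xi1 by simp
    show "\<exists>D > 0. nrm ((\<chi> i. Ahat $ \<pi> i) - A0)
              \<le> 2 / (D * (1 - 2 * xi N x y r TYPE('s))) * delta N x y r A0"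
    proof (cases "v = 0")
      case True
      have "nrm v = 0" using nrm True unfolding is_norm_def by blast
      moreover have "0 \<le> 2 / (1 * (1 - 2 * \<xi>)) * delta N x y r A0"
        using pos d0 by simp
      ultimately show ?thesis unfolding v_def \<xi>_def by (intro exI[of _ 1]) auto
    next
      case False
      have np: "nrm v > 0" using nrm False unfolding is_norm_def
        by (metis less_le)
      have "E \<noteq> 0" using v0 False by blast
      then have Ep: "E > 0" using E0 by simp
      have "E * (1 - 2*\<xi>) > 0" using Ep pos by simp
      then have dp: "delta N x y r A0 > 0" using Ed by linarith
      define D where "D = 2 * delta N x y r A0 / ((1 - 2*\<xi>) * nrm v)"
      have Dp: "D > 0" unfolding D_def using dp pos np by simp
      have "2 / (D * (1 - 2 * \<xi>)) * delta N x y r A0 = nrm v"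
        unfolding D_def using dp pos np by (simp add: field_simps)
      then show ?thesis using Dp unfolding v_def \<xi>_def by (intro exI[of _ D]) auto
    qed
  qed
qed

end
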